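(* Let $\mu>0$, $\alpha>0$, $f(x)=xe^{-x}$, and let $\beta\in L^\infty_+(0,+\infty)$ satisfy $\int_0^{\infty}\beta(a)e^{-\mu a}\,da=1$. Let $a^\star=\sup\{a>0:\int_a^\infty\beta(\sigma)e^{-\mu\sigma}\,d\sigma>0\}\in(0,\infty]$, and let $$\widehat M_0=\Big\{u\in L^1_+(0,\infty):\int_0^{a^\star}u(a)\,da>0\Big\},\qquad \partial\widehat M_0=\Big\{u\in L^1_+(0,\infty):\int_0^{a^\star}u(a)\,da=0\Big\}.$$ For $u_0\in L^1_+(0,\infty)$ let $u(t,\cdot)$ be the solution of $\partial_tu+\partial_au=-\mu u$, $u(t,0)=\alpha f(\int_0^\infty\beta(a)u(t,a)\,da)$, $u(0,\cdot)=u_0$. Then $\widehat M_0$ and $\partial\widehat M_0$ are positively invariant under the semiflow, i.e. $$\int_0^{a^\star}u_0>0\Rightarrow\int_0^{a^\star}u(t,a)\,da>0\ \forall t\ge0,\qquad \int_0^{a^\star}u_0=0\Rightarrow\int_0^{a^\star}u(t,a)\,da=0\ \forall t\ge0.$$ Moreover, if $\int_0^{a^\star}u_0(a)\,da=0$, then $\int_0^\infty\beta(a)u(t,a)\,da=0$ for all $t\ge 0$, the solution is given by $u(t,a)=e^{-\mu t}u_0(a-t)$ if $a\ge t$ and $u(t,a)=0$ if $a\le t$, and hence $\|u(t,\cdot)\|_{L^1}\to 0$ exponentially as $t\to\infty$.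
   Context: Solutions are understood in the integrated sense: $u(t,a)=e^{-\mu t}u_0(a-t)$ if $a\ge t$, $u(t,a)=e^{-\mu a}b(t-a)$ if $a\le t$, where $b$ is the unique continuous solution of $b(t)=\alpha f\big(\int_t^\infty\beta(a)e^{-\mu t}u_0(a-t)\,da+\int_0^t\beta(a)e^{-\mu a}b(t-a)\,da\big)$, $t\ge0$. *)

theory Defs
  imports "HOL-Analysis.Analysis"
begin

definition fnl :: "real \<Rightarrow> real" where
  "fnl x = x * exp (- x)"

definition astar :: "(real \<Rightarrow> real) \<Rightarrow> real \<Rightarrow> ereal" where
  "astar \<beta> \<mu> = Sup (ereal ` {a. 0 < a \<and> (LBINT s:{a<..}. \<beta> s * exp (- \<mu> * s)) > 0})"

definition int_astar :: "(real \<Rightarrow> real) \<Rightarrow> real \<Rightarrow> (real \<Rightarrow> real) \<Rightarrow> real" where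
  "int_astar \<beta> \<mu> v = (LBINT a:{a. 0 < a \<and> ereal a < astar \<beta> \<mu>}. v a)"

text \<open>Integrated solution built from the boundary birth function b.\<close>
definition sol :: "real \<Rightarrow> (real \<Rightarrow> real) \<Rightarrow> (real \<Rightarrow> real) \<Rightarrow> real \<Rightarrow> real \<Rightarrow> real" where
  "sol \<mu> u0 b t a = (if t \<le> a then exp (- \<mu> * t) * u0 (a - t) else exp (- \<mu> * a) * b (t - a))"

end

theory Submission
  imports Defs
begin

lemma gronwall0:
  fixes \<phi> :: "real \<Rightarrow> real" and T K t :: real
  assumes cont: "continuous_on {0..T} \<phi>" and nn: "\<And>s. s \<in> {0..T} \<Longrightarrow> \<phi> s \<ge> 0"
    and K: "K \<ge> 0" and bound: "\<And>s. s \<in> {0..T} \<Longrightarrow> \<phi> s \<le> K * integral {0..s} \<phi>"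
    and t: "t \<in> {0..T}"
  shows "\<phi> t = 0"
proof -
  define \<psi> where "\<psi> = (\<lambda>s. integral {0..s} \<phi>)"
  have d\<psi>: "(\<psi> has_real_derivative \<phi> s) (at s within {0..T})" if "s \<in> {0..T}" for s
    using integral_has_real_derivative[OF cont that] by (simp add: \<psi>_def)
  define g where "g s = exp (- (K * s)) * \<psi> s" for s
  have dg: "(g has_real_derivative (exp (- (K * s))*(\<phi> s - K * \<psi> s))) (at s within {0..t})" if "s \<in> {0..t}" for s
  proof -
    have "(g has_real_derivative (exp (- (K * s))*(-K) * \<psi> s + exp (- (K * s))*\<phi> s)) (at s within {0..T})"
      unfolding g_def using that t
      by (auto intro!: derivative_eq_intros d\<psi>)
    then show ?thesis
      by (rule DERIV_subset[THEN DERIV_cong]) (use t in \<open>auto simp: algebra_simps\<close>)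
  qed
  have "\<exists>x\<in>{0..t}. g t - g 0 = (\<lambda>h. (exp (- (K * x))*(\<phi> x - K * \<psi> x)) * h) (t - 0)"
    using t by (intro mvt_very_simple) (auto intro: dg[unfolded has_field_derivative_def])
  then obtain x where x: "x \<in> {0..t}" and gx: "g t - g 0 = (exp (- (K * x))*(\<phi> x - K * \<psi> x)) * t"
    by auto
  have "\<phi> x - K * \<psi> x \<le> 0" using bound[of x] x t by (auto simp: \<psi>_def)
  moreover have "t \<ge> 0" using t by auto
  ultimately have "g t - g 0 \<le> 0" unfolding gx by (intro mult_nonpos_nonneg mult_nonneg_nonpos) auto
  moreover have "g 0 = 0" by (simp add: g_def \<psi>_def)
  ultimately have "\<psi> t \<le> 0" by (simp add: g_def mult_le_0_iff)
  moreover have "\<psi> t \<ge> 0" unfolding \<psi>_def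
    using t nn by (intro integral_nonneg integrable_continuous_interval continuous_on_subset[OF cont]) auto
  ultimately have "\<psi> t = 0" by simp
  then show ?thesis using bound[OF t] nn[OF t] by (simp add: \<psi>_def)
qed


lemma lbint_affine:
  fixes f :: "real \<Rightarrow> real" and c t :: real
  assumes "c \<noteq> 0"
  shows "(LBINT x:S. f x) = \<bar>c\<bar> * (LBINT y:{y. t + c * y \<in> S}. f (t + c * y))"
  unfolding set_lebesgue_integral_def
  using lborel_integral_real_affine[OF assms, of "\<lambda>x. indicator S x *\<^sub>R f x" t]
  by (simp add: indicator_def)

lemma set_integrable_affine:
  fixes f :: "real \<Rightarrow> real" and c t :: real
  assumes "c \<noteq> 0" "set_integrable lborel S f"
  shows "set_integrable lborel {y. t + c * y \<in> S} (\<lambda>y. f (t + c * y))"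
proof -
  have "integrable lborel (\<lambda>y. (\<lambda>x. indicator S x *\<^sub>R f x) (t + c * y))"
    using assms lborel_integrable_real_affine[of "\<lambda>x. indicator S x *\<^sub>R f x" c t]
    unfolding set_integrable_def by auto
  then show ?thesis unfolding set_integrable_def by (simp add: indicator_def)
qed

lemma set_int_nonneg_AE:
  fixes f :: "real \<Rightarrow> real"
  assumes "AE x in lborel. x \<in> S \<longrightarrow> 0 \<le> f x"
  shows "0 \<le> (LBINT x:S. f x)"
  unfolding set_lebesgue_integral_def
  by (rule integral_nonneg_AE) (use assms in \<open>auto elim!: eventually_mono simp: indicator_def\<close>)

lemma set_int_zero_AE:
  fixes f :: "real \<Rightarrow> real"
  assumes "AE x in lborel. x \<in> S \<longrightarrow> f x = 0"
  shows "(LBINT x:S. f x) = 0"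
  unfolding set_lebesgue_integral_def
  by (rule integral_eq_zero_AE) (use assms in \<open>auto elim!: eventually_mono simp: indicator_def\<close>)

lemma set_int_eq_0_AE:
  fixes f :: "real \<Rightarrow> real"
  assumes "set_integrable lborel S f" "AE x in lborel. x \<in> S \<longrightarrow> 0 \<le> f x"
    and "(LBINT x:S. f x) = 0"
  shows "AE x in lborel. x \<in> S \<longrightarrow> f x = 0"
proof -
  have "AE x in lborel. indicator S x *\<^sub>R f x = 0"
    using assms unfolding set_lebesgue_integral_def set_integrable_def
    by (subst integral_nonneg_eq_0_iff_AE[symmetric])
       (auto elim!: eventually_mono simp: indicator_def)
  then show ?thesis by (auto elim!: eventually_mono simp: indicator_def)
qed

lemma set_int_bdd_mult:
  fixes f g :: "real \<Rightarrow> real"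
  assumes "set_integrable lborel S g" "f \<in> borel_measurable lborel" "S \<in> sets lborel"
    and "AE x in lborel. x \<in> S \<longrightarrow> \<bar>f x\<bar> \<le> C"
  shows "set_integrable lborel S (\<lambda>x. f x * g x)"
  unfolding set_integrable_def
proof (rule Bochner_Integration.integrable_bound[where f="\<lambda>x. C * (indicator S x *\<^sub>R g x)"])
  show "integrable lborel (\<lambda>x. C * (indicator S x *\<^sub>R g x))"
    using assms(1) unfolding set_integrable_def by auto
  have "(\<lambda>x. indicator S x *\<^sub>R g x) \<in> borel_measurable lborel"
    using assms(1) unfolding set_integrable_def by auto
  then have "(\<lambda>x. f x * (indicator S x *\<^sub>R g x)) \<in> borel_measurable lborel"
    using assms(2) by measurable
  then show "(\<lambda>x. indicator S x *\<^sub>R (f x * g x)) \<in> borel_measurable lborel"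
    by (simp add: indicator_def mult.left_commute)
  show "AE x in lborel. norm (indicator S x *\<^sub>R (f x * g x)) \<le> norm (C * (indicator S x *\<^sub>R g x))"
    using assms(4)
  proof (rule eventually_mono)
    fix x assume h: "x \<in> S \<longrightarrow> \<bar>f x\<bar> \<le> C"
    show "norm (indicator S x *\<^sub>R (f x * g x)) \<le> norm (C * (indicator S x *\<^sub>R g x))"
    proof (cases "x \<in> S")
      case True
      then have "\<bar>f x\<bar> * \<bar>g x\<bar> \<le> C * \<bar>g x\<bar>" using h by (intro mult_right_mono) auto
      moreover have "C * \<bar>g x\<bar> \<le> \<bar>C\<bar> * \<bar>g x\<bar>" by (intro mult_right_mono) auto
      ultimately show ?thesis using True by (simp add: abs_mult)
    qed simp
  qed
qed

lemma lbint_reflect_cont: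
  fixes g :: "real \<Rightarrow> real" and s :: real
  assumes "continuous_on {0..s} g"
  shows "(LBINT a:{0..s}. g (s - a)) = integral {0..s} g"
proof -
  have "(LBINT a:{0..s}. g (s - a)) = \<bar>-1\<bar> * (LBINT y:{y. s + (-1) * y \<in> {0..s}}. g (s - (s + (-1) * y)))"
    by (rule lbint_affine) simp
  also have "{y. s + (-1) * y \<in> {0..s}} = {0..s}" by auto
  also have "(LBINT y:{0..s}. g (s - (s + (-1) * y))) = (LBINT y:{0..s}. g y)" by simp
  also have "\<dots> = integral {0..s} g"
    by (rule set_borel_integral_eq_integral(2)[OF borel_integrable_atLeastAtMost'[OF assms]])
  finally show ?thesis by simp
qed


locale setting =
  fixes \<mu> \<alpha> :: real and \<beta> u0 b :: "real \<Rightarrow> real"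
  assumes mu: "\<mu> > 0" and alpha: "\<alpha> > 0"
    and beta_meas: "\<beta> \<in> borel_measurable lborel"
    and beta_nonneg: "\<And>a. a > 0 \<Longrightarrow> \<beta> a \<ge> 0"
    and beta_bdd: "\<exists>C. \<forall>a>0. \<beta> a \<le> C"
    and beta_norm: "(LBINT a:{0<..}. \<beta> a * exp (- \<mu> * a)) = 1"
    and u0_meas: "u0 \<in> borel_measurable lborel"
    and u0_int: "set_integrable lborel {0<..} u0"
    and u0_nonneg: "\<And>a. a > 0 \<Longrightarrow> u0 a \<ge> 0"
    and b_cont: "continuous_on {0..} b"
    and b_eq: "\<And>t. t \<ge> 0 \<Longrightarrow> b t = \<alpha> * fnl
        ((LBINT a:{t<..}. \<beta> a * exp (- \<mu> * t) * u0 (a - t))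
         + (LBINT a:{0..t}. \<beta> a * exp (- \<mu> * a) * b (t - a)))"
begin

definition "A = astar \<beta> \<mu>"
definition "D = {a. 0 < a \<and> ereal a < A}"
definition "bb s = b (max 0 s)"
definition "S t a = sol \<mu> u0 bb t a"
definition "W a = (LBINT s:{a<..}. \<beta> s * exp (- \<mu> * s))"
definition "Cb = (SOME C. C \<ge> 0 \<and> (\<forall>a>0. \<bar>\<beta> a\<bar> \<le> C))"

lemma Cb: "Cb \<ge> 0" "\<And>a. a > 0 \<Longrightarrow> \<bar>\<beta> a\<bar> \<le> Cb"
proof -
  obtain C where C: "\<forall>a>0. \<beta> a \<le> C" using beta_bdd by blast
  have "\<exists>C. C \<ge> 0 \<and> (\<forall>a>0. \<bar>\<beta> a\<bar> \<le> C)"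
    using C beta_nonneg by (intro exI[of _ "max C 0"]) force
  from someI_ex[OF this] show "Cb \<ge> 0" "\<And>a. a > 0 \<Longrightarrow> \<bar>\<beta> a\<bar> \<le> Cb"
    unfolding Cb_def by auto
qed

lemma bb_cont: "continuous_on UNIV bb"
  unfolding bb_def
  by (rule continuous_on_compose2[OF b_cont]) (auto intro!: continuous_intros)

lemma bb_meas[measurable]: "bb \<in> borel_measurable borel"
  using bb_cont by (rule borel_measurable_continuous_onI)

lemma bb_eq: "s \<ge> 0 \<Longrightarrow> bb s = b s"
  by (simp add: bb_def)

lemma sol_eq: "sol \<mu> u0 b t a = S t a"
  by (simp add: S_def sol_def bb_def)

lemma S_meas[measurable]: "(\<lambda>a. S t a) \<in> borel_measurable borel"
  unfolding S_def sol_def using u0_meas by measurable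

lemma beta_meas'[measurable]: "\<beta> \<in> borel_measurable borel"
  using beta_meas by simp

lemma u0_meas'[measurable]: "u0 \<in> borel_measurable borel"
  using u0_meas by simp

lemma w_int: "set_integrable lborel {0<..} (\<lambda>a. \<beta> a * exp (- \<mu> * a))"
proof (rule ccontr)
  assume "\<not> ?thesis"
  then have "(LBINT a:{0<..}. \<beta> a * exp (- \<mu> * a)) = 0"
    unfolding set_lebesgue_integral_def set_integrable_def
    by (rule not_integrable_integral_eq)
  with beta_norm show False by simp
qed

lemma w_int_sub: "B \<in> sets lborel \<Longrightarrow> B \<subseteq> {0<..} \<Longrightarrow> set_integrable lborel B (\<lambda>a. \<beta> a * exp (- \<mu> * a))"
  by (rule set_integrable_subset[OF w_int])

lemma AZ: "AE a in lborel. 0 < a \<and> A \<le> ereal a \<longrightarrow> \<beta> a = 0"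
proof -
  define Q where "Q = {q\<in>\<rat>. 0 < q \<and> A < ereal q}"
  have cQ: "countable Q" unfolding Q_def
    by (rule countable_subset[OF _ countable_rat]) auto
  have "AE a in lborel. q < a \<longrightarrow> \<beta> a = 0" if q: "q \<in> Q" for q
  proof -
    have q0: "0 < q" "A < ereal q" using q by (auto simp: Q_def)
    have "\<not> (W q > 0)"
    proof
      assume "W q > 0"
      then have "ereal q \<in> ereal ` {a. 0 < a \<and> (LBINT s:{a<..}. \<beta> s * exp (- \<mu> * s)) > 0}"
        using q0 by (auto simp: W_def)
      then have "ereal q \<le> A" unfolding A_def astar_def by (rule Sup_upper)
      with q0 show False by simp
    qed
    moreover have "W q \<ge> 0" unfolding W_def
      by (rule set_int_nonneg_AE) (use q0 beta_nonneg in auto)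
    ultimately have "W q = 0" by simp
    then have "AE a in lborel. a \<in> {q<..} \<longrightarrow> \<beta> a * exp (- \<mu> * a) = 0"
      unfolding W_def
      by (intro set_int_eq_0_AE w_int_sub) (use q0 beta_nonneg in auto)
    then show ?thesis by (auto elim!: eventually_mono)
  qed
  then have "AE a in lborel. \<forall>q\<in>Q. q < a \<longrightarrow> \<beta> a = 0"
    by (intro AE_ball_countable' cQ)
  moreover have "AE a in lborel. a \<noteq> real_of_ereal A" by (rule AE_lborel_singleton)
  ultimately show ?thesis
  proof eventually_elim
    case (elim a)
    show ?case
    proof
      assume a: "0 < a \<and> A \<le> ereal a"
      have "\<exists>q\<in>Q. q < a"
      proof (cases A)
        case (real r)
        with a elim have "r < a" by auto
        then obtain q where "q \<in> \<rat>" "max 0 r < q" "q < a" using a Rats_dense_in_real[of "max 0 r" a] by auto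
        then show ?thesis using real by (auto simp: Q_def)
      next
        case PInf with a show ?thesis by simp
      next
        case MInf
        obtain q where "q \<in> \<rat>" "0 < q" "q < a" using a Rats_dense_in_real[of 0 a] by auto
        then show ?thesis using MInf by (auto simp: Q_def)
      qed
      then show "\<beta> a = 0" using elim by auto
    qed
  qed
qed

lemma AP: "0 < a \<Longrightarrow> ereal a < A \<Longrightarrow> W a > 0"
proof -
  assume a: "0 < a" "ereal a < A"
  then have "\<exists>y\<in>ereal ` {a. 0 < a \<and> (LBINT s:{a<..}. \<beta> s * exp (- \<mu> * s)) > 0}. ereal a < y"
    unfolding A_def astar_def by (simp add: less_Sup_iff)
  then obtain a' where a': "0 < a'" "W a' > 0" "a < a'" by (auto simp: W_def)
  have "W a' \<le> W a"
    unfolding W_def set_lebesgue_integral_def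
  proof (rule integral_mono)
    show "integrable lborel (\<lambda>x. indicator {a'<..} x *\<^sub>R (\<beta> x * exp (- \<mu> * x)))"
      using w_int_sub[of "{a'<..}"] a' unfolding set_integrable_def by auto
    show "integrable lborel (\<lambda>x. indicator {a<..} x *\<^sub>R (\<beta> x * exp (- \<mu> * x)))"
      using w_int_sub[of "{a<..}"] a unfolding set_integrable_def by auto
    fix x show "indicator {a'<..} x *\<^sub>R (\<beta> x * exp (- \<mu> * x)) \<le> indicator {a<..} x *\<^sub>R (\<beta> x * exp (- \<mu> * x))"
      using a a' beta_nonneg[of x] by (auto simp: indicator_def)
  qed
  with a' show ?thesis by simp
qed

lemma D_meas[measurable]: "D \<in> sets borel"
proof (cases A)
  case (real r)
  then have "D = {0<..<r}" by (auto simp: D_def)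
  then show ?thesis by simp
next
  case PInf
  then have "D = {0<..}" by (auto simp: D_def)
  then show ?thesis by simp
next
  case MInf
  then have "D = {}" by (auto simp: D_def)
  then show ?thesis by simp
qed

end


lemma set_integrable_cong_pt:
  fixes f g :: "real \<Rightarrow> real"
  assumes "set_integrable lborel S f" "\<And>x. x \<in> S \<Longrightarrow> f x = g x"
  shows "set_integrable lborel S g"
proof -
  have "(\<lambda>x. indicator S x *\<^sub>R f x) = (\<lambda>x. indicator S x *\<^sub>R g x)"
    using assms(2) by (auto simp: indicator_def fun_eq_iff)
  then show ?thesis using assms(1) unfolding set_integrable_def by simp
qed

context setting begin

definition "I1 s = (LBINT a:{s<..}. \<beta> a * exp (- \<mu> * s) * u0 (a - s))"
definition "J s = (LBINT a:{0..s}. \<beta> a * exp (- \<mu> * a) * b (s - a))"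

lemma b_eq': "s \<ge> 0 \<Longrightarrow> b s = \<alpha> * fnl (I1 s + J s)"
  unfolding I1_def J_def by (rule b_eq)

lemma bs_cont: "continuous_on {0..s} (\<lambda>a. b (s - a))"
  by (rule continuous_on_compose2[OF b_cont]) (auto intro!: continuous_intros)

lemma bbs_cont: "continuous_on X (\<lambda>a. bb (s - a))"
  by (rule continuous_on_compose2[OF bb_cont]) (auto intro!: continuous_intros)

lemma u0_shift_int: "set_integrable lborel {t<..} (\<lambda>a. u0 (a - t))"
proof -
  have "set_integrable lborel {y. - t + 1 * y \<in> {0<..}} (\<lambda>y. u0 (- t + 1 * y))"
    by (rule set_integrable_affine[OF _ u0_int]) simp
  moreover have "{y. - t + 1 * y \<in> {0<..}} = {t<..}" by auto
  ultimately show ?thesis by simp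
qed

lemma I1_int: "s \<ge> 0 \<Longrightarrow> set_integrable lborel {s<..} (\<lambda>a. \<beta> a * exp (- \<mu> * s) * u0 (a - s))"
proof -
  assume s: "s \<ge> 0"
  have "set_integrable lborel {s<..} (\<lambda>a. \<beta> a * (exp (- \<mu> * s) * u0 (a - s)))"
    by (rule set_int_bdd_mult[where C=Cb]) (use u0_shift_int s Cb in auto)
  then show ?thesis by (simp add: mult.assoc)
qed

lemma J_int_bb: "set_integrable lborel {0..s} (\<lambda>a. \<beta> a * exp (- \<mu> * a) * bb (s - a))"
proof -
  have "set_integrable lborel {0..s} (\<lambda>a. \<beta> a * (exp (- \<mu> * a) * bb (s - a)))"
  proof (rule set_int_bdd_mult[where C=Cb])
    show "set_integrable lborel {0..s} (\<lambda>a. exp (- \<mu> * a) * bb (s - a))"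
      by (intro borel_integrable_atLeastAtMost' continuous_intros bbs_cont)
    show "AE x in lborel. x \<in> {0..s} \<longrightarrow> \<bar>\<beta> x\<bar> \<le> Cb"
      using AE_lborel_singleton[of 0] by eventually_elim (use Cb in auto)
  qed auto
  then show ?thesis by (simp add: mult.assoc)
qed

lemma J_int: "set_integrable lborel {0..s} (\<lambda>a. \<beta> a * exp (- \<mu> * a) * b (s - a))"
  by (rule set_integrable_cong_pt[OF J_int_bb]) (simp add: bb_def)

lemma J_bb: "J s = (LBINT a:{0..s}. \<beta> a * exp (- \<mu> * a) * bb (s - a))"
  unfolding J_def by (rule set_lebesgue_integral_cong) (auto simp: bb_def)

lemma I1_nonneg: "s \<ge> 0 \<Longrightarrow> I1 s \<ge> 0"
  unfolding I1_def by (rule set_int_nonneg_AE) (auto intro!: mult_nonneg_nonneg beta_nonneg u0_nonneg)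

lemma J_bounds:
  assumes s: "s \<ge> 0"
  shows "\<bar>J s\<bar> \<le> Cb * integral {0..s} (\<lambda>r. \<bar>b r\<bar>)"
    and "J s \<ge> - (Cb * integral {0..s} (\<lambda>r. max 0 (- b r)))"
proof -
  have c1: "continuous_on {0..s} (\<lambda>r. \<bar>b r\<bar>)"
    by (intro continuous_intros continuous_on_subset[OF b_cont]) auto
  have c2: "continuous_on {0..s} (\<lambda>r. max 0 (- b r))"
    by (intro continuous_intros continuous_on_subset[OF b_cont]) auto
  have e1: "(LBINT a:{0..s}. Cb * \<bar>b (s - a)\<bar>) = Cb * integral {0..s} (\<lambda>r. \<bar>b r\<bar>)"
    using lbint_reflect_cont[OF c1] by simp
  have e2: "(LBINT a:{0..s}. Cb * max 0 (- b (s - a))) = Cb * integral {0..s} (\<lambda>r. max 0 (- b r))"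
    using lbint_reflect_cont[OF c2] by simp
  have i1: "set_integrable lborel {0..s} (\<lambda>a. Cb * \<bar>b (s - a)\<bar>)"
    by (intro borel_integrable_atLeastAtMost' continuous_intros bs_cont)
  have i1': "set_integrable lborel {0..s} (\<lambda>a. - (Cb * \<bar>b (s - a)\<bar>))"
    by (intro borel_integrable_atLeastAtMost' continuous_intros bs_cont)
  have i2: "set_integrable lborel {0..s} (\<lambda>a. - (Cb * max 0 (- b (s - a))))"
    by (intro borel_integrable_atLeastAtMost' continuous_intros bs_cont)
  have wb: "0 \<le> \<beta> a * exp (- \<mu> * a) \<and> \<beta> a * exp (- \<mu> * a) \<le> Cb" if "a > 0" for a
  proof -
    have "exp (- \<mu> * a) \<le> 1" using mu that by simp
    then have "\<beta> a * exp (- \<mu> * a) \<le> Cb * 1"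
      using Cb(2)[OF that] beta_nonneg[OF that] by (intro mult_mono) auto
    then show ?thesis using beta_nonneg[OF that] by simp
  qed
  have "J s \<le> (LBINT a:{0..s}. Cb * \<bar>b (s - a)\<bar>)"
    unfolding J_def
  proof (rule set_integral_mono_AE[OF J_int i1])
    show "AE x\<in>{0..s} in lborel. \<beta> x * exp (- \<mu> * x) * b (s - x) \<le> Cb * \<bar>b (s - x)\<bar>"
      using AE_lborel_singleton[of 0]
    proof eventually_elim
      case (elim x)
      show ?case
      proof
        assume "x \<in> {0..s}"
        with elim have x: "x > 0" by auto
        have "\<beta> x * exp (- \<mu> * x) * b (s - x) \<le> \<beta> x * exp (- \<mu> * x) * \<bar>b (s - x)\<bar>"
          using wb[OF x] by (intro mult_left_mono) auto
        also have "\<dots> \<le> Cb * \<bar>b (s - x)\<bar>" using wb[OF x] by (intro mult_right_mono) auto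
        finally show "\<beta> x * exp (- \<mu> * x) * b (s - x) \<le> Cb * \<bar>b (s - x)\<bar>" .
      qed
    qed
  qed
  moreover have "(LBINT a:{0..s}. - (Cb * \<bar>b (s - a)\<bar>)) \<le> J s"
    unfolding J_def
  proof (rule set_integral_mono_AE[OF i1' J_int])
    show "AE x\<in>{0..s} in lborel. - (Cb * \<bar>b (s - x)\<bar>) \<le> \<beta> x * exp (- \<mu> * x) * b (s - x)"
      using AE_lborel_singleton[of 0]
    proof eventually_elim
      case (elim x)
      show ?case
      proof
        assume "x \<in> {0..s}"
        with elim have x: "x > 0" by auto
        have "- (Cb * \<bar>b (s - x)\<bar>) \<le> - (\<beta> x * exp (- \<mu> * x) * \<bar>b (s - x)\<bar>)"
          using wb[OF x] by (simp add: mult_right_mono)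
        also have "\<dots> \<le> \<beta> x * exp (- \<mu> * x) * b (s - x)"
          using wb[OF x] by (metis abs_ge_minus_self minus_le_iff mult_left_mono mult_minus_right)
        finally show "- (Cb * \<bar>b (s - x)\<bar>) \<le> \<beta> x * exp (- \<mu> * x) * b (s - x)" .
      qed
    qed
  qed
  moreover have "(LBINT a:{0..s}. - (Cb * \<bar>b (s - a)\<bar>)) = - (LBINT a:{0..s}. Cb * \<bar>b (s - a)\<bar>)"
    unfolding set_lebesgue_integral_def by (subst integral_minus[symmetric]) simp
  ultimately show "\<bar>J s\<bar> \<le> Cb * integral {0..s} (\<lambda>r. \<bar>b r\<bar>)" using e1 by linarith
  have "(LBINT a:{0..s}. - (Cb * max 0 (- b (s - a)))) \<le> J s"
    unfolding J_def
  proof (rule set_integral_mono_AE[OF i2 J_int])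
    show "AE x\<in>{0..s} in lborel. - (Cb * max 0 (- b (s - x))) \<le> \<beta> x * exp (- \<mu> * x) * b (s - x)"
      using AE_lborel_singleton[of 0]
    proof eventually_elim
      case (elim x)
      show ?case
      proof
        assume "x \<in> {0..s}"
        with elim have x: "x > 0" by auto
        have "- (Cb * max 0 (- b (s - x))) \<le> - (\<beta> x * exp (- \<mu> * x) * max 0 (- b (s - x)))"
          using wb[OF x] by (simp add: mult_right_mono)
        also have "\<dots> \<le> \<beta> x * exp (- \<mu> * x) * b (s - x)"
          using wb[OF x] by (metis max.cobounded2 minus_le_iff mult_left_mono mult_minus_right)
        finally show "- (Cb * max 0 (- b (s - x))) \<le> \<beta> x * exp (- \<mu> * x) * b (s - x)" .
      qed
    qed
  qed
  moreover have "(LBINT a:{0..s}. - (Cb * max 0 (- b (s - a)))) = - (LBINT a:{0..s}. Cb * max 0 (- b (s - a)))"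
    unfolding set_lebesgue_integral_def by (subst integral_minus[symmetric]) simp
  ultimately show "J s \<ge> - (Cb * integral {0..s} (\<lambda>r. max 0 (- b r)))" using e2 by linarith
qed

end



context setting begin

lemma b_bound: "\<exists>M\<ge>0. \<forall>s\<in>{0..T}. \<bar>b s\<bar> \<le> M"
proof -
  have "compact (b ` {0..T})"
    by (intro compact_continuous_image continuous_on_subset[OF b_cont]) auto
  then obtain M where "\<forall>x\<in>b ` {0..T}. norm x \<le> M"
    using compact_imp_bounded bounded_iff by metis
  then show ?thesis by (intro exI[of _ "max M 0"]) auto
qed

lemma int_abs_b_bound:
  assumes "0 \<le> s" "\<forall>r\<in>{0..s}. \<bar>b r\<bar> \<le> M"
  shows "integral {0..s} (\<lambda>r. \<bar>b r\<bar>) \<le> M * s"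
proof -
  have "integral {0..s} (\<lambda>r. \<bar>b r\<bar>) \<le> integral {0..s} (\<lambda>r. M)"
    using assms
    by (intro integral_le integrable_continuous_interval continuous_intros
          continuous_on_subset[OF b_cont]) auto
  also have "\<dots> = M * s" using assms by simp
  finally show ?thesis .
qed

lemma b_nonneg: "t \<ge> 0 \<Longrightarrow> b t \<ge> 0"
proof -
  assume t: "t \<ge> 0"
  obtain M where M: "M \<ge> 0" "\<forall>s\<in>{0..t}. \<bar>b s\<bar> \<le> M" using b_bound by blast
  define L where "L = Cb * (M * t)"
  define K where "K = \<alpha> * exp L * Cb"
  define \<phi> where "\<phi> = (\<lambda>r. max 0 (- b r))"
  have cont: "continuous_on {0..t} \<phi>"
    unfolding \<phi>_def by (intro continuous_intros continuous_on_subset[OF b_cont]) auto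
  have K: "K \<ge> 0" unfolding K_def using alpha Cb by auto
  have bound: "\<phi> s \<le> K * integral {0..s} \<phi>" if s: "s \<in> {0..t}" for s
  proof -
    have s0: "s \<ge> 0" using s by auto
    have ip: "integral {0..s} \<phi> \<ge> 0"
      unfolding \<phi>_def by (intro integral_nonneg integrable_continuous_interval continuous_intros
          continuous_on_subset[OF b_cont]) auto
    define X where "X = I1 s + J s"
    have bX: "b s = \<alpha> * (X * exp (- X))" using b_eq'[OF s0] by (simp add: X_def fnl_def)
    show ?thesis
    proof (cases "X \<ge> 0")
      case True
      then have "b s \<ge> 0" using bX alpha by simp
      then have "\<phi> s = 0" by (simp add: \<phi>_def)
      then show ?thesis using K ip by simp
    next
      case False
      have J1: "- J s \<le> Cb * integral {0..s} \<phi>" using J_bounds(2)[OF s0] by (simp add: \<phi>_def)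
      have J2: "\<bar>J s\<bar> \<le> L"
      proof -
        have "\<bar>J s\<bar> \<le> Cb * integral {0..s} (\<lambda>r. \<bar>b r\<bar>)" by (rule J_bounds(1)[OF s0])
        also have "\<dots> \<le> Cb * (M * t)"
        proof (rule mult_left_mono[OF _ Cb(1)])
          have "integral {0..s} (\<lambda>r. \<bar>b r\<bar>) \<le> M * s" using M s by (intro int_abs_b_bound) auto
          also have "\<dots> \<le> M * t" using M s by (intro mult_left_mono) auto
          finally show "integral {0..s} (\<lambda>r. \<bar>b r\<bar>) \<le> M * t" .
        qed
        finally show ?thesis by (simp add: L_def)
      qed
      have I: "I1 s \<ge> 0" by (rule I1_nonneg[OF s0])
      have mX: "0 \<le> - X" "- X \<le> Cb * integral {0..s} \<phi>" "- X \<le> L"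
        using False I J1 J2 by (auto simp: X_def)
      have "X * exp (- X) \<le> 0" using False by (simp add: mult_nonpos_nonneg)
      then have "\<alpha> * (X * exp (- X)) \<le> 0" using alpha by (simp add: mult_nonneg_nonpos)
      then have "\<phi> s = \<alpha> * (- X) * exp (- X)"
        using bX by (simp add: \<phi>_def max_def)
      also have "\<dots> \<le> \<alpha> * (Cb * integral {0..s} \<phi>) * exp L"
        using mX alpha by (intro mult_mono) auto
      also have "\<dots> = K * integral {0..s} \<phi>" by (simp add: K_def)
      finally show ?thesis .
    qed
  qed
  have "\<phi> t = 0"
    by (rule gronwall0[OF cont _ K bound]) (use t in \<open>auto simp: \<phi>_def\<close>)
  then show "b t \<ge> 0" by (simp add: \<phi>_def)
qed

lemma b_zero:
  assumes I0: "\<And>s. s \<ge> 0 \<Longrightarrow> I1 s = 0" and t: "t \<ge> 0"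
  shows "b t = 0"
proof -
  obtain M where M: "M \<ge> 0" "\<forall>s\<in>{0..t}. \<bar>b s\<bar> \<le> M" using b_bound by blast
  define L where "L = Cb * (M * t)"
  define K where "K = \<alpha> * exp L * Cb"
  define \<phi> where "\<phi> = (\<lambda>r. \<bar>b r\<bar>)"
  have cont: "continuous_on {0..t} \<phi>"
    unfolding \<phi>_def by (intro continuous_intros continuous_on_subset[OF b_cont]) auto
  have K: "K \<ge> 0" unfolding K_def using alpha Cb by auto
  have bound: "\<phi> s \<le> K * integral {0..s} \<phi>" if s: "s \<in> {0..t}" for s
  proof -
    have s0: "s \<ge> 0" using s by auto
    define X where "X = J s"
    have bX: "b s = \<alpha> * (X * exp (- X))" using b_eq'[OF s0] I0[OF s0] by (simp add: X_def fnl_def)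
    have J1: "\<bar>X\<bar> \<le> Cb * integral {0..s} \<phi>" using J_bounds(1)[OF s0] by (simp add: \<phi>_def X_def)
    have J2: "\<bar>X\<bar> \<le> L"
    proof -
      have "\<bar>J s\<bar> \<le> Cb * integral {0..s} (\<lambda>r. \<bar>b r\<bar>)" by (rule J_bounds(1)[OF s0])
      also have "\<dots> \<le> Cb * (M * t)"
      proof (rule mult_left_mono[OF _ Cb(1)])
        have "integral {0..s} (\<lambda>r. \<bar>b r\<bar>) \<le> M * s" using M s by (intro int_abs_b_bound) auto
        also have "\<dots> \<le> M * t" using M s by (intro mult_left_mono) auto
        finally show "integral {0..s} (\<lambda>r. \<bar>b r\<bar>) \<le> M * t" .
      qed
      finally show ?thesis by (simp add: L_def X_def)
    qed
    have "\<phi> s = \<alpha> * \<bar>X\<bar> * exp (- X)"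
      using alpha bX by (simp add: \<phi>_def abs_mult)
    also have "\<dots> \<le> \<alpha> * (Cb * integral {0..s} \<phi>) * exp L"
      using J1 J2 alpha by (intro mult_mono) auto
    also have "\<dots> = K * integral {0..s} \<phi>" by (simp add: K_def)
    finally show ?thesis .
  qed
  have "\<phi> t = 0"
    by (rule gronwall0[OF cont _ K bound]) (use t in \<open>auto simp: \<phi>_def\<close>)
  then show "b t = 0" by (simp add: \<phi>_def)
qed

end


lemma set_bm: "f \<in> borel_measurable borel \<Longrightarrow> A \<in> sets borel \<Longrightarrow> set_borel_measurable lborel A (f :: real \<Rightarrow> real)"
  unfolding set_borel_measurable_def by (intro borel_measurable_scaleR borel_measurable_indicator) auto

context setting begin

lemma S_shift: "S (t' + r) (\<sigma> + r) = exp (- \<mu> * r) * S t' \<sigma>"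
  by (simp add: S_def sol_def exp_add[symmetric] algebra_simps)

lemma S_nonneg: "s \<ge> 0 \<Longrightarrow> a > 0 \<Longrightarrow> a \<noteq> s \<Longrightarrow> S s a \<ge> 0"
  using b_nonneg[of "s - a"] u0_nonneg[of "a - s"]
  by (auto simp: S_def sol_def bb_def)

lemma S_int: "s \<ge> 0 \<Longrightarrow> set_integrable lborel {0<..} (S s)"
proof -
  assume s: "s \<ge> 0"
  define g where "g a = indicator {0..s} a *\<^sub>R (exp (- \<mu> * a) * bb (s - a))
     + indicator {s<..} a *\<^sub>R (exp (- \<mu> * s) * u0 (a - s))" for a
  have "continuous_on {0..s} (\<lambda>a. exp (- \<mu> * a) * bb (s - a))" by (intro continuous_intros bbs_cont)
  then have i1: "integrable lborel (\<lambda>a. indicator {0..s} a *\<^sub>R (exp (- \<mu> * a) * bb (s - a)))"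
    using borel_integrable_atLeastAtMost'[of 0 s "\<lambda>a. exp (- \<mu> * a) * bb (s - a)"]
    unfolding set_integrable_def by simp
  have i2: "integrable lborel (\<lambda>a. indicator {s<..} a *\<^sub>R (exp (- \<mu> * s) * u0 (a - s)))"
    using set_integrable_mult_right[of "exp (- \<mu> * s)", OF u0_shift_int[of s]] unfolding set_integrable_def by simp
  have "integrable lborel g" unfolding g_def using i1 i2 by auto
  then show ?thesis
    unfolding set_integrable_def
  proof (rule integrable_cong_AE_imp)
    show "(\<lambda>x. indicator {0<..} x *\<^sub>R S s x) \<in> borel_measurable lborel" by measurable
    show "AE x in lborel. g x = indicator {0<..} x *\<^sub>R S s x"
      using AE_lborel_singleton[of s] AE_lborel_singleton[of 0]
    proof eventually_elim
      case (elim x)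
      then show ?case using s
        by (cases "x < 0"; cases "x < s") (auto simp: g_def S_def sol_def indicator_def)
    qed
  qed
qed

lemma betaS_int: "s \<ge> 0 \<Longrightarrow> set_integrable lborel {0<..} (\<lambda>a. \<beta> a * S s a)"
  by (rule set_int_bdd_mult[where C=Cb]) (use S_int Cb in auto)

lemma betaS_int_sub: "s \<ge> 0 \<Longrightarrow> B \<in> sets borel \<Longrightarrow> B \<subseteq> {0<..} \<Longrightarrow> set_integrable lborel B (\<lambda>a. \<beta> a * S s a)"
  by (rule set_integrable_subset[OF betaS_int]) auto

lemma S_int_sub: "s \<ge> 0 \<Longrightarrow> B \<in> sets borel \<Longrightarrow> B \<subseteq> {0<..} \<Longrightarrow> set_integrable lborel B (S s)"
  by (rule set_integrable_subset[OF S_int]) auto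

lemma Xrep: "s \<ge> 0 \<Longrightarrow> I1 s + J s = (LBINT a:{0<..}. \<beta> a * S s a)"
proof -
  assume s: "s \<ge> 0"
  have "(LBINT a:{0<..}. \<beta> a * S s a) = (LBINT a:({0<..<s} \<union> {s<..}). \<beta> a * S s a)"
  proof (rule set_integral_cong_set[OF set_bm set_bm])
    show "AE x in lborel. (x \<in> {0<..<s} \<union> {s<..}) = (x \<in> {0<..})"
      using AE_lborel_singleton[of s] by eventually_elim (use s in auto)
  qed auto
  also have "\<dots> = (LBINT a:{0<..<s}. \<beta> a * S s a) + (LBINT a:{s<..}. \<beta> a * S s a)"
    using s by (intro set_integral_Un betaS_int_sub) auto
  also have "(LBINT a:{s<..}. \<beta> a * S s a) = I1 s"
    unfolding I1_def by (rule set_lebesgue_integral_cong) (auto simp: S_def sol_def)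
  also have "(LBINT a:{0<..<s}. \<beta> a * S s a) = J s"
  proof -
    have "J s = (LBINT a:{0<..<s}. \<beta> a * exp (- \<mu> * a) * bb (s - a))"
      unfolding J_bb
    proof (rule set_integral_cong_set[OF set_bm set_bm])
      show "AE x in lborel. (x \<in> {0<..<s}) = (x \<in> {0..s})"
        using AE_lborel_singleton[of s] AE_lborel_singleton[of 0] by eventually_elim auto
    qed auto
    also have "\<dots> = (LBINT a:{0<..<s}. \<beta> a * S s a)"
      by (rule set_lebesgue_integral_cong) (auto simp: S_def sol_def)
    finally show ?thesis by simp
  qed
  finally show ?thesis by simp
qed

end


lemma set_int_cong_AE:
  fixes f g :: "real \<Rightarrow> real"
  assumes "f \<in> borel_measurable borel" "g \<in> borel_measurable borel" "S \<in> sets borel"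
    and "AE x in lborel. x \<in> S \<longrightarrow> f x = g x"
  shows "(LBINT x:S. f x) = (LBINT x:S. g x)"
  unfolding set_lebesgue_integral_def
  by (rule integral_cong_AE) (use assms in \<open>auto elim!: eventually_mono simp: indicator_def\<close>)

context setting begin

lemma int_astar_eq: "int_astar \<beta> \<mu> v = (LBINT a:D. v a)"
  by (simp add: int_astar_def D_def A_def)

lemma D_sub: "D \<subseteq> {0<..}" by (auto simp: D_def)

lemma AE_shift:
  fixes P :: "real \<Rightarrow> bool"
  assumes "AE x in lborel. P x" "Measurable.pred borel P"
  shows "AE x in lborel. P (x - s)"
  using AE_borel_affine[of 1 P "- s", OF _ assms(2) assms(1)] by simp

context
  assumes H: "int_astar \<beta> \<mu> u0 = 0"
begin

lemma P2a: "AE \<sigma> in lborel. \<sigma> \<in> D \<longrightarrow> u0 \<sigma> = 0"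
proof (rule set_int_eq_0_AE)
  show "set_integrable lborel D u0" by (rule set_integrable_subset[OF u0_int]) (use D_sub in auto)
  show "AE x in lborel. x \<in> D \<longrightarrow> 0 \<le> u0 x" by (auto simp: D_def intro!: u0_nonneg)
  show "(LBINT x:D. u0 x) = 0" using H by (simp add: int_astar_eq)
qed

lemma P2a': "AE a in lborel. a - s \<in> D \<longrightarrow> u0 (a - s) = 0"
  by (rule AE_shift[OF P2a]) measurable

lemma P2b: "s \<ge> 0 \<Longrightarrow> AE a in lborel. a > s \<longrightarrow> \<beta> a * u0 (a - s) = 0"
proof -
  assume s: "s \<ge> 0"
  show ?thesis using P2a'[of s] AZ
  proof eventually_elim
    case (elim a)
    show ?case
    proof
      assume a: "a > s"
      show "\<beta> a * u0 (a - s) = 0"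
      proof (cases "ereal (a - s) < A")
        case True
        then have "a - s \<in> D" using a by (auto simp: D_def)
        then show ?thesis using elim by simp
      next
        case False
        then have "A \<le> ereal (a - s)" by (simp add: not_less)
        also have "ereal (a - s) \<le> ereal a" using s by simp
        finally have "A \<le> ereal a" .
        then show ?thesis using elim a s by simp
      qed
    qed
  qed
qed

lemma P2c: "s \<ge> 0 \<Longrightarrow> I1 s = 0"
  unfolding I1_def
  by (rule set_int_zero_AE) (use P2b[of s] in \<open>auto elim!: eventually_mono\<close>)

lemma P2d: "s \<ge> 0 \<Longrightarrow> b s = 0"
  by (rule b_zero[OF P2c])

lemma P2e: "t \<ge> 0 \<Longrightarrow> S t a = (if a \<ge> t then exp (- \<mu> * t) * u0 (a - t) else 0)"
  using P2d[of "t - a"] by (auto simp: S_def sol_def bb_def)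

lemma P2f: "t \<ge> 0 \<Longrightarrow> (LBINT a:D. S t a) = 0"
proof -
  assume t: "t \<ge> 0"
  show ?thesis
  proof (rule set_int_zero_AE)
    show "AE a in lborel. a \<in> D \<longrightarrow> S t a = 0"
      using P2a'[of t] AE_lborel_singleton[of t]
    proof eventually_elim
      case (elim a)
      show ?case
      proof
        assume a: "a \<in> D"
        show "S t a = 0"
        proof (cases "a > t")
          case True
          have l1: "ereal (a - t) \<le> ereal a" using t by simp
          have l2: "ereal a < A" using a by (simp add: D_def)
          have "ereal (a - t) < A" using le_less_trans[OF l1 l2] .
          then have "a - t \<in> D" using True by (auto simp: D_def)
          then show ?thesis using elim True by (simp add: P2e[OF t])
        next
          case False
          then show ?thesis using elim by (simp add: P2e[OF t])
        qed
      qed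
    qed
  qed
qed

lemma P2g: "t \<ge> 0 \<Longrightarrow> (LBINT a:{0<..}. \<beta> a * S t a) = 0"
proof -
  assume t: "t \<ge> 0"
  show ?thesis
  proof (rule set_int_zero_AE)
    show "AE a in lborel. a \<in> {0<..} \<longrightarrow> \<beta> a * S t a = 0"
      using P2b[OF t] AE_lborel_singleton[of t]
    proof eventually_elim
      case (elim a)
      then show ?case by (cases "a > t") (auto simp: P2e[OF t])
    qed
  qed
qed

lemma P2h: "t \<ge> 0 \<Longrightarrow> (LBINT a:{0<..}. \<bar>S t a\<bar>) = (LBINT a:{0<..}. \<bar>u0 a\<bar>) * exp (- \<mu> * t)"
proof -
  assume t: "t \<ge> 0"
  have "(LBINT a:{0<..}. \<bar>S t a\<bar>) = (LBINT a:{0<..}. (if t < a then exp (- \<mu> * t) * \<bar>u0 (a - t)\<bar> else 0))"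
  proof (rule set_int_cong_AE)
    show "AE x in lborel. x \<in> {0<..} \<longrightarrow> \<bar>S t x\<bar> = (if t < x then exp (- \<mu> * t) * \<bar>u0 (x - t)\<bar> else 0)"
      using AE_lborel_singleton[of t]
      by eventually_elim (auto simp: P2e[OF t] abs_mult)
  qed measurable
  also have "\<dots> = (LBINT a:{t<..}. exp (- \<mu> * t) * \<bar>u0 (a - t)\<bar>)"
    unfolding set_lebesgue_integral_def
    by (rule Bochner_Integration.integral_cong) (use t in \<open>auto simp: indicator_def\<close>)
  also have "\<dots> = exp (- \<mu> * t) * (LBINT a:{t<..}. \<bar>u0 (a - t)\<bar>)" by simp
  also have "(LBINT a:{t<..}. \<bar>u0 (a - t)\<bar>) = (LBINT a:{0<..}. \<bar>u0 a\<bar>)"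
  proof -
    have "(LBINT a:{0<..}. \<bar>u0 a\<bar>) = \<bar>1\<bar> * (LBINT y:{y. - t + 1 * y \<in> {0<..}}. \<bar>u0 (- t + 1 * y)\<bar>)"
      by (rule lbint_affine) simp
    moreover have "{y. - t + 1 * y \<in> {0<..}} = {t<..}" by auto
    ultimately show ?thesis by simp
  qed
  finally show ?thesis by simp
qed

end
end


context setting begin

lemma fnl_zero: "fnl x = 0 \<Longrightarrow> x = 0"
  by (simp add: fnl_def)

lemma births_zero:
  assumes s: "s \<ge> 0" and bs: "b s = 0"
  shows "AE a in lborel. a > 0 \<longrightarrow> \<beta> a * S s a = 0"
proof -
  have "fnl (I1 s + J s) = 0" using b_eq'[OF s] bs alpha by simp
  then have "I1 s + J s = 0" by (rule fnl_zero)
  then have z: "(LBINT a:{0<..}. \<beta> a * S s a) = 0" using Xrep[OF s] by simp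
  have "AE a in lborel. a \<in> {0<..} \<longrightarrow> \<beta> a * S s a = 0"
  proof (rule set_int_eq_0_AE[OF betaS_int[OF s] _ z])
    show "AE x in lborel. x \<in> {0<..} \<longrightarrow> 0 \<le> \<beta> x * S s x"
      using AE_lborel_singleton[of s]
      by eventually_elim (auto intro!: mult_nonneg_nonneg beta_nonneg S_nonneg s)
  qed
  then show ?thesis by simp
qed

lemma step:
  assumes t: "\<delta> \<le> t" and d: "0 < \<delta>" and dA: "ereal \<delta> \<le> A"
    and Zt: "AE a in lborel. a \<in> D \<longrightarrow> S t a = 0"
  shows "AE \<sigma> in lborel. \<sigma> \<in> D \<longrightarrow> S (t - \<delta>) \<sigma> = 0"
proof -
  define t' where "t' = t - \<delta>"
  have t'0: "t' \<ge> 0" and tt: "t = t' + \<delta>" using t by (auto simp: t'_def)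
  have i: "AE \<sigma> in lborel. \<sigma> \<in> D \<and> ereal (\<sigma> + \<delta>) < A \<longrightarrow> S t' \<sigma> = 0"
  proof -
    have "AE \<sigma> in lborel. (\<delta> + 1 * \<sigma>) \<in> D \<longrightarrow> S t (\<delta> + 1 * \<sigma>) = 0"
      by (rule AE_borel_affine[of 1 "\<lambda>a. a \<in> D \<longrightarrow> S t a = 0" \<delta>, OF _ _ Zt]) auto
    then show ?thesis
    proof (rule eventually_mono)
      fix \<sigma> assume h: "\<delta> + 1 * \<sigma> \<in> D \<longrightarrow> S t (\<delta> + 1 * \<sigma>) = 0"
      show "\<sigma> \<in> D \<and> ereal (\<sigma> + \<delta>) < A \<longrightarrow> S t' \<sigma> = 0"
      proof
        assume \<sigma>: "\<sigma> \<in> D \<and> ereal (\<sigma> + \<delta>) < A"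
        then have "\<delta> + 1 * \<sigma> \<in> D" using d by (auto simp: D_def add.commute)
        then have "S t (\<sigma> + \<delta>) = 0" using h by (simp add: add.commute)
        moreover have "S t (\<sigma> + \<delta>) = exp (- \<mu> * \<delta>) * S t' \<sigma>"
          unfolding tt by (rule S_shift)
        ultimately show "S t' \<sigma> = 0" by simp
      qed
    qed
  qed
  have ii: "AE \<sigma> in lborel. \<sigma> \<in> D \<and> \<not> ereal (\<sigma> + \<delta>) < A \<longrightarrow> S t' \<sigma> = 0"
  proof (cases A)
    case PInf
    then show ?thesis by simp
  next
    case MInf
    then show ?thesis by (simp add: D_def)
  next
    case (real Af)
    have ba: "AE s in lborel. t' < s \<and> s < t \<longrightarrow> b s = 0"
    proof -
      have "AE s in lborel. (t + (-1) * s) \<in> D \<longrightarrow> S t (t + (-1) * s) = 0"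
        by (rule AE_borel_affine[of "-1" "\<lambda>a. a \<in> D \<longrightarrow> S t a = 0" t, OF _ _ Zt]) auto
      then show ?thesis
      proof (rule eventually_mono)
        fix s assume h: "t + (-1) * s \<in> D \<longrightarrow> S t (t + (-1) * s) = 0"
        show "t' < s \<and> s < t \<longrightarrow> b s = 0"
        proof
          assume s: "t' < s \<and> s < t"
          have "ereal (t - s) < ereal \<delta>" using s tt by simp
          then have "ereal (t - s) < A" using dA by (rule less_le_trans)
          then have "t + (-1) * s \<in> D" using s by (auto simp: D_def)
          then have "S t (t - s) = 0" using h by simp
          moreover have "S t (t - s) = exp (- \<mu> * (t - s)) * b s"
            using s t'0 by (simp add: S_def sol_def bb_def)
          ultimately show "b s = 0" by simp
        qed
      qed
    qed
    have c: "AE s in lborel. AE \<sigma> in lborel. (t' < s \<and> s < t \<and> \<sigma> > 0 \<longrightarrow> \<beta> (\<sigma> + (s - t')) * S t' \<sigma> = 0)"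
      using ba
    proof (rule eventually_mono)
      fix s assume hs: "t' < s \<and> s < t \<longrightarrow> b s = 0"
      show "AE \<sigma> in lborel. (t' < s \<and> s < t \<and> \<sigma> > 0 \<longrightarrow> \<beta> (\<sigma> + (s - t')) * S t' \<sigma> = 0)"
      proof (cases "t' < s \<and> s < t")
        case True
        then have s0: "s \<ge> 0" using t'0 by simp
        have h0: "AE a in lborel. a > 0 \<longrightarrow> \<beta> a * S s a = 0"
          using births_zero[OF s0] hs True by simp
        have "AE \<sigma> in lborel. (s - t') + 1 * \<sigma> > 0 \<longrightarrow> \<beta> ((s - t') + 1 * \<sigma>) * S s ((s - t') + 1 * \<sigma>) = 0"
          by (rule AE_borel_affine[of 1 "\<lambda>a. a > 0 \<longrightarrow> \<beta> a * S s a = 0" "s - t'", OF _ _ h0]) auto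
        then show ?thesis
        proof (rule eventually_mono)
          fix \<sigma> assume h: "(s - t') + 1 * \<sigma> > 0 \<longrightarrow> \<beta> ((s - t') + 1 * \<sigma>) * S s ((s - t') + 1 * \<sigma>) = 0"
          show "t' < s \<and> s < t \<and> \<sigma> > 0 \<longrightarrow> \<beta> (\<sigma> + (s - t')) * S t' \<sigma> = 0"
          proof
            assume h2: "t' < s \<and> s < t \<and> \<sigma> > 0"
            have e: "S s (\<sigma> + (s - t')) = exp (- \<mu> * (s - t')) * S t' \<sigma>"
              using S_shift[of t' "s - t'" \<sigma>] by simp
            have "\<beta> (\<sigma> + (s - t')) * S s (\<sigma> + (s - t')) = 0"
              using h h2 by (simp add: add.commute)
            then show "\<beta> (\<sigma> + (s - t')) * S t' \<sigma> = 0" unfolding e by simp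
          qed
        qed
      next
        case False
        then show ?thesis by (intro AE_I2) blast
      qed
    qed
    have dd: "AE \<sigma> in lborel. AE s in lborel. (t' < s \<and> s < t \<and> \<sigma> > 0 \<longrightarrow> \<beta> (\<sigma> + (s - t')) * S t' \<sigma> = 0)"
    proof (subst lborel_pair.AE_commute)
      show "{x \<in> space (lborel \<Otimes>\<^sub>M lborel). t' < snd x \<and> snd x < t \<and> fst x > 0 \<longrightarrow> \<beta> (fst x + (snd x - t')) * S t' (fst x) = 0}
          \<in> sets (lborel \<Otimes>\<^sub>M lborel)"
        by measurable
    qed (rule c)
    then show ?thesis
    proof (rule eventually_mono)
      fix \<sigma> assume h\<sigma>: "AE s in lborel. (t' < s \<and> s < t \<and> \<sigma> > 0 \<longrightarrow> \<beta> (\<sigma> + (s - t')) * S t' \<sigma> = 0)"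
      show "\<sigma> \<in> D \<and> \<not> ereal (\<sigma> + \<delta>) < A \<longrightarrow> S t' \<sigma> = 0"
      proof
        assume \<sigma>: "\<sigma> \<in> D \<and> \<not> ereal (\<sigma> + \<delta>) < A"
        then have \<sigma>0: "\<sigma> > 0" "ereal \<sigma> < A" and \<sigma>A: "Af \<le> \<sigma> + \<delta>" using real by (auto simp: D_def)
        show "S t' \<sigma> = 0"
        proof (rule ccontr)
          assume nz: "S t' \<sigma> \<noteq> 0"
          have h1: "AE s in lborel. t' < s \<and> s < t \<longrightarrow> \<beta> (\<sigma> + (s - t')) = 0"
            using h\<sigma> by eventually_elim (use nz \<sigma>0 in auto)
          have "AE a in lborel. t' < (t' - \<sigma>) + 1 * a \<and> (t' - \<sigma>) + 1 * a < t \<longrightarrow> \<beta> (\<sigma> + (((t' - \<sigma>) + 1 * a) - t')) = 0"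
            by (rule AE_borel_affine[of 1 "\<lambda>s. t' < s \<and> s < t \<longrightarrow> \<beta> (\<sigma> + (s - t')) = 0" "t' - \<sigma>", OF _ _ h1]) auto
          then have "AE a in lborel. \<sigma> < a \<longrightarrow> \<beta> a = 0"
            using AZ
          proof eventually_elim
            case (elim a)
            show ?case
            proof
              assume a: "\<sigma> < a"
              show "\<beta> a = 0"
              proof (cases "a < \<sigma> + \<delta>")
                case True
                then show ?thesis using elim(1) a tt by simp
              next
                case False
                then have "A \<le> ereal a" using \<sigma>A real by simp
                then show ?thesis using elim(2) a \<sigma>0 by simp
              qed
            qed
          qed
          then have "W \<sigma> = 0" unfolding W_def
            by (intro set_int_zero_AE) (auto elim!: eventually_mono)
          moreover have "W \<sigma> > 0" using AP \<sigma>0 by simp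
          ultimately show False by simp
        qed
      qed
    qed
  qed
  show ?thesis using i ii unfolding t'_def by eventually_elim auto
qed

end


context setting begin

lemma sol_eq_fun: "sol \<mu> u0 b t = S t"
  by (rule ext) (rule sol_eq)

lemma part1:
  assumes pos: "int_astar \<beta> \<mu> u0 > 0" and t: "t \<ge> 0"
  shows "int_astar \<beta> \<mu> (sol \<mu> u0 b t) > 0"
proof -
  define Z where "Z t \<longleftrightarrow> (AE a in lborel. a \<in> D \<longrightarrow> S t a = 0)" for t
  have Z0: "\<not> Z 0"
  proof
    assume "Z 0"
    then have "AE a in lborel. a \<in> D \<longrightarrow> u0 a = 0"
      unfolding Z_def by (rule eventually_mono) (auto simp: S_def sol_def D_def)
    then have "(LBINT a:D. u0 a) = 0" by (rule set_int_zero_AE)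
    with pos show False by (simp add: int_astar_eq)
  qed
  have "D \<noteq> {}"
  proof
    assume "D = {}"
    then have "int_astar \<beta> \<mu> u0 = 0" by (simp add: int_astar_eq set_lebesgue_integral_def)
    with pos show False by simp
  qed
  then obtain \<delta>0 where d0: "0 < \<delta>0" "ereal \<delta>0 \<le> A" by (auto simp: D_def less_imp_le)
  have ind: "\<forall>t. 0 \<le> t \<and> t \<le> real n * \<delta>0 \<longrightarrow> \<not> Z t" for n
  proof (induction n)
    case 0
    then show ?case using Z0 by auto
  next
    case (Suc n)
    show ?case
    proof (intro allI impI)
      fix t assume ht: "0 \<le> t \<and> t \<le> real (Suc n) * \<delta>0"
      show "\<not> Z t"
      proof (cases "t \<le> real n * \<delta>0")
        case True
        then show ?thesis using Suc.IH ht by blast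
      next
        case False
        have n0: "real n * \<delta>0 \<ge> 0" using d0 by simp
        then have tpos: "t > 0" using False by simp
        define \<delta> where "\<delta> = min t \<delta>0"
        have dpos: "0 < \<delta>" "\<delta> \<le> t" using tpos d0 by (auto simp: \<delta>_def)
        have dA: "ereal \<delta> \<le> A"
        proof -
          have "ereal \<delta> \<le> ereal \<delta>0" by (simp add: \<delta>_def)
          then show ?thesis using d0(2) by (rule order_trans)
        qed
        have "0 \<le> t - \<delta> \<and> t - \<delta> \<le> real n * \<delta>0"
          using ht n0 dpos by (auto simp: \<delta>_def min_def algebra_simps)
        then have nZ: "\<not> Z (t - \<delta>)" using Suc.IH by blast
        show "\<not> Z t"
        proof
          assume "Z t"
          then have "Z (t - \<delta>)" unfolding Z_def by (intro step dpos dA)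
          with nZ show False by simp
        qed
      qed
    qed
  qed
  obtain n :: nat where "t / \<delta>0 \<le> real n" using real_arch_simple by blast
  then have "t \<le> real n * \<delta>0" using d0 by (simp add: field_simps)
  then have nZt: "\<not> Z t" using ind t by blast
  have m0: "(LBINT a:D. S t a) \<ge> 0"
    using AE_lborel_singleton[of t]
    by (intro set_int_nonneg_AE) (auto elim!: eventually_mono intro!: S_nonneg t simp: D_def)
  have "(LBINT a:D. S t a) \<noteq> 0"
  proof
    assume "(LBINT a:D. S t a) = 0"
    then have "Z t" unfolding Z_def
    proof (intro set_int_eq_0_AE[OF S_int_sub[OF t]])
      show "AE x in lborel. x \<in> D \<longrightarrow> 0 \<le> S t x"
        using AE_lborel_singleton[of t]
        by (auto elim!: eventually_mono intro!: S_nonneg t simp: D_def)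
    qed (use D_sub in auto)
    with nZt show False by simp
  qed
  with m0 show ?thesis by (simp add: int_astar_eq sol_eq_fun)
qed

end

theorem theorem3p5:
  fixes \<mu> \<alpha> :: real and \<beta> u0 b :: "real \<Rightarrow> real"
  assumes mu: "\<mu> > 0" and alpha: "\<alpha> > 0"
    and beta_meas: "\<beta> \<in> borel_measurable lborel"
    and beta_nonneg: "\<And>a. a > 0 \<Longrightarrow> \<beta> a \<ge> 0"
    and beta_bdd: "\<exists>C. \<forall>a>0. \<beta> a \<le> C"
    and beta_norm: "(LBINT a:{0<..}. \<beta> a * exp (- \<mu> * a)) = 1"
    and u0_meas: "u0 \<in> borel_measurable lborel"
    and u0_int: "set_integrable lborel {0<..} u0"
    and u0_nonneg: "\<And>a. a > 0 \<Longrightarrow> u0 a \<ge> 0"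
    and b_cont: "continuous_on {0..} b"
    and b_eq: "\<And>t. t \<ge> 0 \<Longrightarrow> b t = \<alpha> * fnl
        ((LBINT a:{t<..}. \<beta> a * exp (- \<mu> * t) * u0 (a - t))
         + (LBINT a:{0..t}. \<beta> a * exp (- \<mu> * a) * b (t - a)))"
  shows "(int_astar \<beta> \<mu> u0 > 0 \<longrightarrow>
            (\<forall>t\<ge>0. int_astar \<beta> \<mu> (sol \<mu> u0 b t) > 0))
       \<and> (int_astar \<beta> \<mu> u0 = 0 \<longrightarrow>
            (\<forall>t\<ge>0. int_astar \<beta> \<mu> (sol \<mu> u0 b t) = 0)
          \<and> (\<forall>t\<ge>0. (LBINT a:{0<..}. \<beta> a * sol \<mu> u0 b t a) = 0)
          \<and> (\<forall>t\<ge>0. \<forall>a>0. sol \<mu> u0 b t a =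
                (if a \<ge> t then exp (- \<mu> * t) * u0 (a - t) else 0))
          \<and> (\<exists>C \<delta>. \<delta> > 0 \<and> (\<forall>t\<ge>0.
                (LBINT a:{0<..}. \<bar>sol \<mu> u0 b t a\<bar>) \<le> C * exp (- \<delta> * t))))"
proof -
  interpret setting \<mu> \<alpha> \<beta> u0 b
    by (rule setting.intro) (fact mu alpha beta_meas beta_nonneg beta_bdd beta_norm u0_meas u0_int u0_nonneg b_cont b_eq)+
  show ?thesis
  proof (intro conjI impI allI)
    fix t :: real
    assume "int_astar \<beta> \<mu> u0 > 0" "t \<ge> 0"
    then show "int_astar \<beta> \<mu> (sol \<mu> u0 b t) > 0" by (rule part1)
  next
    fix t :: real
    assume H: "int_astar \<beta> \<mu> u0 = 0" and t: "t \<ge> 0"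
    show "int_astar \<beta> \<mu> (sol \<mu> u0 b t) = 0"
      using P2f[OF H t] by (simp add: int_astar_eq sol_eq_fun)
  next
    fix t :: real
    assume H: "int_astar \<beta> \<mu> u0 = 0" and t: "t \<ge> 0"
    show "(LBINT a:{0<..}. \<beta> a * sol \<mu> u0 b t a) = 0"
      using P2g[OF H t] by (simp add: sol_eq)
  next
    fix t a :: real
    assume H: "int_astar \<beta> \<mu> u0 = 0" and t: "t \<ge> 0" and a: "a > 0"
    show "sol \<mu> u0 b t a = (if a \<ge> t then exp (- \<mu> * t) * u0 (a - t) else 0)"
      using P2e[OF H t] by (simp add: sol_eq)
  next
    assume H: "int_astar \<beta> \<mu> u0 = 0"
    show "\<exists>C \<delta>. \<delta> > 0 \<and> (\<forall>t\<ge>0. (LBINT a:{0<..}. \<bar>sol \<mu> u0 b t a\<bar>) \<le> C * exp (- \<delta> * t))"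
      using P2h[OF H] mu by (intro exI[of _ "LBINT a:{0<..}. \<bar>u0 a\<bar>"] exI[of _ \<mu>]) (simp add: sol_eq)
  qed
qed

end
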